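(* Let $\mathcal{C}\subseteq\mathbb{R}^n$ be a nonempty closed convex set. For any $\theta_0\in\mathcal{C}$, $$K_{\mathcal{C}}=\{v:\mathbb{R}_+v\subseteq F_{\mathcal{C}}(\theta_0)\}=\bigcap_{\sigma>0}\frac{F_{\mathcal{C}}(\theta_0)}{\sigma}.$$ Moreover, $K_{\mathcal{C}}\subseteq T_{\mathcal{C}}(\theta)$ for every $\theta\in\mathcal{C}$. If furthermore $F_{\mathcal{C}}(\theta_0)$ is a cone, then for $\theta\in\mathcal{C}$ the equality $K_{\mathcal{C}}=T_{\mathcal{C}}(\theta)$ holds if and only if $\theta_0-(\theta-\theta_0)\in\mathcal{C}$; in particular $K_{\mathcal{C}}=T_{\mathcal{C}}(\theta_0)=F_{\mathcal{C}}(\theta_0)$.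
   Context: For $\theta_0\in\mathcal{C}$: $F_{\mathcal{C}}(\theta_0)=\{\theta-\theta_0:\theta\in\mathcal{C}\}$, and the tangent cone is $T_{\mathcal{C}}(\theta_0)=\mathrm{cl}\{\alpha(\theta-\theta_0):\alpha\ge0,\theta\in\mathcal{C}\}$. The core cone is $K_{\mathcal{C}}=\bigcap_{\theta\in\mathcal{C}}T_{\mathcal{C}}(\theta)$. For $v\in\mathbb{R}^n$, $\mathbb{R}_+v=\{\alpha v:\alpha\ge0\}$, and $S/\sigma=\{s/\sigma:s\in S\}$. *)

theory Defs
  imports "HOL-Analysis.Analysis"
begin

definition feas_dirs :: "'a::euclidean_space set \<Rightarrow> 'a \<Rightarrow> 'a set" where
  "feas_dirs C \<theta>0 = {\<theta> - \<theta>0 | \<theta>. \<theta> \<in> C}"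

definition tangent_cone :: "'a::euclidean_space set \<Rightarrow> 'a \<Rightarrow> 'a set" where
  "tangent_cone C \<theta>0 = closure {\<alpha> *\<^sub>R (\<theta> - \<theta>0) | \<alpha> \<theta>. \<alpha> \<ge> 0 \<and> \<theta> \<in> C}"

definition core_cone :: "'a::euclidean_space set \<Rightarrow> 'a set" where
  "core_cone C = (\<Inter>\<theta>\<in>C. tangent_cone C \<theta>)"

end

theory Submission
  imports Defs
begin

lemma feas_iff: "w \<in> feas_dirs C \<theta>0 \<longleftrightarrow> \<theta>0 + w \<in> C"
  unfolding feas_dirs_def by (auto intro!: exI[of _ "\<theta>0 + w"])

lemma feas_eq: "feas_dirs C \<theta>0 = (+) (- \<theta>0) ` C"
  unfolding feas_dirs_def by (auto simp: image_iff)

lemma rec_in_T: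
  fixes C :: "'a::euclidean_space set"
  assumes "convex C" "\<theta>0 \<in> C" "\<forall>\<alpha>\<ge>0. \<theta>0 + \<alpha> *\<^sub>R v \<in> C" "\<theta> \<in> C"
  shows "v \<in> tangent_cone C \<theta>"
  unfolding tangent_cone_def closure_approachable
proof (intro allI impI)
  fix e :: real assume e: "e > 0"
  define n where "n = norm (\<theta>0 - \<theta>)"
  define t where "t = min 1 (e / (n + 1))"
  have n0: "n \<ge> 0" unfolding n_def by simp
  have t0: "t > 0" unfolding t_def using e n0 by simp
  have t1: "t \<le> 1" unfolding t_def by simp
  have p: "\<theta>0 + (1/t) *\<^sub>R v \<in> C" using assms(3) t0 by simp
  have c: "(1 - t) *\<^sub>R \<theta> + t *\<^sub>R (\<theta>0 + (1/t) *\<^sub>R v) \<in> C"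
    using convexD_alt[OF assms(1) assms(4) p, of t] t0 t1 by simp
  have eq: "(1 - t) *\<^sub>R \<theta> + t *\<^sub>R (\<theta>0 + (1/t) *\<^sub>R v) - \<theta> = t *\<^sub>R (\<theta>0 - \<theta>) + v"
    using t0 by (simp add: algebra_simps)
  have "t * n \<le> e / (n+1) * n" using n0 unfolding t_def by (intro mult_right_mono) auto
  also have "\<dots> < e" using e n0 by (simp add: field_simps)
  finally have lt: "t * n < e" .
  have "dist (t *\<^sub>R (\<theta>0 - \<theta>) + v) v = t * n"
    using t0 by (simp add: dist_norm n_def)
  then show "\<exists>y\<in>{\<alpha> *\<^sub>R (\<theta>' - \<theta>) |\<alpha> \<theta>'. 0 \<le> \<alpha> \<and> \<theta>' \<in> C}. dist y v < e"
    using lt c eq by (intro bexI[of _ "t *\<^sub>R (\<theta>0 - \<theta>) + v"]) (auto intro!: exI[of _ 1] exI[of _ "(1 - t) *\<^sub>R \<theta> + t *\<^sub>R (\<theta>0 + (1/t) *\<^sub>R v)"])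
qed

lemma normal_T:
  fixes C :: "'a::euclidean_space set"
  assumes "\<forall>c\<in>C. inner n (c - q) \<le> 0" "v \<in> tangent_cone C q"
  shows "inner n v \<le> 0"
proof -
  have "closure {\<alpha> *\<^sub>R (\<theta> - q) |\<alpha> \<theta>. \<alpha> \<ge> 0 \<and> \<theta> \<in> C} \<subseteq> {x. inner n x \<le> 0}"
    using assms(1) by (intro closure_minimal closed_halfspace_le)
       (auto simp: mult_nonneg_nonpos)
  then show ?thesis using assms(2) unfolding tangent_cone_def by auto
qed

lemma T_sub_rec:
  fixes C :: "'a::euclidean_space set"
  assumes "closed C" "convex C" "\<theta>0 \<in> C" "\<forall>q\<in>C. v \<in> tangent_cone C q" "s \<ge> 0"
  shows "\<theta>0 + s *\<^sub>R v \<in> C"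
proof -
  have ne: "C \<noteq> {}" using assms(3) by auto
  define D where "D r = (dist (\<theta>0 + r *\<^sub>R v) (closest_point C (\<theta>0 + r *\<^sub>R v)))^2" for r
  have step: "D (r + h) \<le> D r + h^2 * (norm v)^2" if h: "h \<ge> 0" for r h
  proof -
    define x where "x = \<theta>0 + r *\<^sub>R v"
    define q where "q = closest_point C x"
    have qC: "q \<in> C" unfolding q_def using closest_point_in_set[OF assms(1) ne] .
    have nd: "\<forall>c\<in>C. inner (x - q) (c - q) \<le> 0"
      unfolding q_def using closest_point_dot[OF assms(2,1)] by auto
    have nv: "inner (x - q) v \<le> 0" using normal_T[OF nd] assms(4) qC by auto
    have "dist (\<theta>0 + (r+h) *\<^sub>R v) (closest_point C (\<theta>0 + (r+h) *\<^sub>R v)) \<le> dist (\<theta>0 + (r+h) *\<^sub>R v) q"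
      using closest_point_le[OF assms(1) qC] .
    then have "D (r+h) \<le> (dist (\<theta>0 + (r+h) *\<^sub>R v) q)^2"
      unfolding D_def by (intro power_mono) auto
    also have "(dist (\<theta>0 + (r+h) *\<^sub>R v) q)^2 = (norm ((x - q) + h *\<^sub>R v))^2"
      unfolding x_def dist_norm by (simp add: algebra_simps)
    also have "\<dots> = (norm (x - q))^2 + 2 * h * inner (x - q) v + h^2 * (norm v)^2"
      unfolding power2_norm_eq_inner by (simp add: inner_add_left inner_add_right inner_commute algebra_simps power2_eq_square)
    also have "\<dots> \<le> (norm (x - q))^2 + h^2 * (norm v)^2"
      using nv h by (simp add: mult_nonneg_nonpos)
    also have "(norm (x - q))^2 = D r" unfolding D_def x_def q_def dist_norm by simp
    finally show ?thesis .
  qed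
  have D0: "D 0 = 0" unfolding D_def using closest_point_self[OF assms(3)] by simp
  have ind: "D (real k * h) \<le> real k * h^2 * (norm v)^2" if "h \<ge> 0" for k h
  proof (induction k)
    case 0 then show ?case using D0 by simp
  next
    case (Suc k)
    have "D (real (Suc k) * h) = D (real k * h + h)" by (simp add: algebra_simps)
    also have "\<dots> \<le> D (real k * h) + h^2 * (norm v)^2" using step that by blast
    also have "\<dots> \<le> real (Suc k) * h^2 * (norm v)^2" using Suc by (simp add: algebra_simps)
    finally show ?case .
  qed
  have Dle: "D s \<le> s^2 * (norm v)^2 / real N" if "N > 0" for N
  proof -
    have "D (real N * (s / real N)) \<le> real N * (s / real N)^2 * (norm v)^2"
      using ind[of "s / real N" N] assms(5) by simp
    then show ?thesis using that by (simp add: power2_eq_square field_simps)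
  qed
  have "D s \<le> 0"
  proof (rule ccontr)
    assume "\<not> D s \<le> 0"
    then have pos: "D s > 0" by simp
    obtain N :: nat where N: "N > s^2 * (norm v)^2 / D s" using reals_Archimedean2 by blast
    have Np: "N > 0" using N pos
      by (metis divide_nonneg_pos linorder_not_less of_nat_0_less_iff order_le_less_trans zero_le_mult_iff zero_le_power2)
    have "s^2 * (norm v)^2 < N * D s" using N pos by (simp add: field_simps)
    moreover have "D s * N \<le> s^2 * (norm v)^2" using Dle[OF Np] Np by (simp add: field_simps)
    ultimately show False by (simp add: algebra_simps)
  qed
  then have "D s = 0" unfolding D_def by (simp add: antisym)
  then have "\<theta>0 + s *\<^sub>R v = closest_point C (\<theta>0 + s *\<^sub>R v)" unfolding D_def by simp
  then show ?thesis using closest_point_in_set[OF assms(1) ne] by metis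
qed

theorem lemma7:
  fixes C :: "'a::euclidean_space set" and \<theta>0 :: 'a
  assumes "C \<noteq> {}" and "closed C" and "convex C" and "\<theta>0 \<in> C"
  shows "core_cone C = {v. \<forall>\<alpha>::real. \<alpha> \<ge> 0 \<longrightarrow> \<alpha> *\<^sub>R v \<in> feas_dirs C \<theta>0}
       \<and> core_cone C = (\<Inter>\<sigma>\<in>{\<sigma>::real. \<sigma> > 0}. (\<lambda>s. s /\<^sub>R \<sigma>) ` feas_dirs C \<theta>0)
       \<and> (\<forall>\<theta>\<in>C. core_cone C \<subseteq> tangent_cone C \<theta>)
       \<and> (cone (feas_dirs C \<theta>0) \<longrightarrow>
           (\<forall>\<theta>\<in>C. core_cone C = tangent_cone C \<theta> \<longleftrightarrow> \<theta>0 - (\<theta> - \<theta>0) \<in> C)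
           \<and> core_cone C = tangent_cone C \<theta>0 \<and> tangent_cone C \<theta>0 = feas_dirs C \<theta>0)"
proof -
  let ?F = "feas_dirs C \<theta>0"
  let ?R = "{v. \<forall>\<alpha>::real. \<alpha> \<ge> 0 \<longrightarrow> \<alpha> *\<^sub>R v \<in> ?F}"
  have P1: "core_cone C = ?R"
  proof
    show "core_cone C \<subseteq> ?R"
      using T_sub_rec[OF assms(2,3,4)] unfolding core_cone_def by (auto simp: feas_iff)
    show "?R \<subseteq> core_cone C"
      using rec_in_T[OF assms(3,4)] unfolding core_cone_def by (auto simp: feas_iff)
  qed
  have P2: "?R = (\<Inter>\<sigma>\<in>{\<sigma>::real. \<sigma> > 0}. (\<lambda>s. s /\<^sub>R \<sigma>) ` ?F)"
  proof
    show "?R \<subseteq> (\<Inter>\<sigma>\<in>{\<sigma>::real. \<sigma> > 0}. (\<lambda>s. s /\<^sub>R \<sigma>) ` ?F)"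
    proof (clarsimp)
      fix v and \<sigma> :: real assume v: "\<forall>\<alpha>\<ge>0. \<alpha> *\<^sub>R v \<in> ?F" and s: "\<sigma> > 0"
      then have "\<sigma> *\<^sub>R v \<in> ?F" by simp
      moreover have "v = (\<sigma> *\<^sub>R v) /\<^sub>R \<sigma>" using s by simp
      ultimately show "v \<in> (\<lambda>s. s /\<^sub>R \<sigma>) ` ?F" by blast
    qed
    show "(\<Inter>\<sigma>\<in>{\<sigma>::real. \<sigma> > 0}. (\<lambda>s. s /\<^sub>R \<sigma>) ` ?F) \<subseteq> ?R"
    proof (clarsimp)
      fix v and \<alpha> :: real assume v: "\<forall>\<sigma>>0. v \<in> (\<lambda>s. s /\<^sub>R \<sigma>) ` ?F" and a: "0 \<le> \<alpha>"
      show "\<alpha> *\<^sub>R v \<in> ?F"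
      proof (cases "\<alpha> = 0")
        case True then show ?thesis using assms(4) by (simp add: feas_iff)
      next
        case False
        then have ap: "\<alpha> > 0" using a by simp
        then obtain w where w: "w \<in> ?F" "v = w /\<^sub>R \<alpha>" using v by blast
        then have "\<alpha> *\<^sub>R v = w" using ap by simp
        then show ?thesis using w by simp
      qed
    qed
  qed
  have P3: "\<forall>\<theta>\<in>C. core_cone C \<subseteq> tangent_cone C \<theta>" unfolding core_cone_def by auto
  have P4: "(\<forall>\<theta>\<in>C. core_cone C = tangent_cone C \<theta> \<longleftrightarrow> \<theta>0 - (\<theta> - \<theta>0) \<in> C)
           \<and> core_cone C = tangent_cone C \<theta>0 \<and> tangent_cone C \<theta>0 = ?F" if cF: "cone ?F"
  proof -
    have coreF: "core_cone C = ?F"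
      unfolding P1 using cF unfolding cone_def by (auto dest: spec[of _ 1])
    have cvF: "convex ?F" unfolding feas_eq using convex_translation[OF assms(3)] by simp
    have clF: "closed ?F" unfolding feas_eq by (rule closed_translation[OF assms(2)])
    have addF: "\<And>x y. x \<in> ?F \<Longrightarrow> y \<in> ?F \<Longrightarrow> x + y \<in> ?F"
      using convex_cone[of ?F] cvF cF by blast
    have main: "core_cone C = tangent_cone C \<theta> \<longleftrightarrow> \<theta>0 - (\<theta> - \<theta>0) \<in> C" if th: "\<theta> \<in> C" for \<theta>
    proof
      assume eq: "core_cone C = tangent_cone C \<theta>"
      have "1 *\<^sub>R (\<theta>0 - \<theta>) \<in> {\<alpha> *\<^sub>R (\<theta>' - \<theta>) |\<alpha> \<theta>'. \<alpha> \<ge> 0 \<and> \<theta>' \<in> C}"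
        using assms(4) by (intro CollectI exI[of _ 1] exI[of _ \<theta>0]) simp
      then have "\<theta>0 - \<theta> \<in> tangent_cone C \<theta>" unfolding tangent_cone_def
        using closure_subset[of "{\<alpha> *\<^sub>R (\<theta>' - \<theta>) |\<alpha> \<theta>'. \<alpha> \<ge> 0 \<and> \<theta>' \<in> C}"]
        by (simp only: scaleR_one subset_iff)
      then have "\<theta>0 - \<theta> \<in> ?F" using eq coreF by simp
      then show "\<theta>0 - (\<theta> - \<theta>0) \<in> C" by (simp add: feas_iff algebra_simps)
    next
      assume h: "\<theta>0 - (\<theta> - \<theta>0) \<in> C"
      have m: "\<theta>0 - \<theta> \<in> ?F" using h by (simp add: feas_iff algebra_simps)
      have "tangent_cone C \<theta> \<subseteq> ?F" unfolding tangent_cone_def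
      proof (rule closure_minimal[OF _ clF], clarify)
        fix \<alpha> :: real and c assume a: "\<alpha> \<ge> 0" and c: "c \<in> C"
        have "c - \<theta>0 \<in> ?F" using c by (simp add: feas_iff)
        then have "(c - \<theta>0) + (\<theta>0 - \<theta>) \<in> ?F" using addF m by blast
        then have "c - \<theta> \<in> ?F" by simp
        then show "\<alpha> *\<^sub>R (c - \<theta>) \<in> ?F" using cF a unfolding cone_def by blast
      qed
      then show "core_cone C = tangent_cone C \<theta>" using P3 th coreF by blast
    qed
    have "core_cone C = tangent_cone C \<theta>0" using main[OF assms(4)] assms(4) by simp
    then show ?thesis using main coreF by simp
  qed
  have P2': "core_cone C = (\<Inter>\<sigma>\<in>{\<sigma>::real. \<sigma> > 0}. (\<lambda>s. s /\<^sub>R \<sigma>) ` ?F)"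
    using P1 P2 by (rule trans)
  show ?thesis
    apply (rule conjI, rule P1)
    apply (rule conjI, rule P2')
    apply (rule conjI, rule P3)
    apply (rule impI, erule P4)
    done
qed

end
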